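(* Let $M\ge1$ be an integer. There exists a single linear map $\mathcal{U}:\mathcal{B}(\mathcal{H}_M^{\otimes2})\to\mathcal{B}(\mathcal{H}_M^{\otimes2})$ that is unitary with respect to the Hilbert–Schmidt inner product $\langle A,B\rangle=\mathrm{Tr}(A^\dagger B)$ such that $\mathcal{U}(\bar{Q}_f)=U_f$ for every permutation $f$ of $\mathbb{Z}_M$.
   Context: $\mathcal{H}_M$ is an $M$-dimensional Hilbert space with orthonormal basis $\{|x\rangle\}_{x\in\mathbb{Z}_M}$ and $\mathcal{B}(\mathcal{H}_M^{\otimes2})$ denotes the space of linear operators on $\mathcal{H}_M\otimes\mathcal{H}_M$. For a permutation $f$ of $\mathbb{Z}_M$: the standard oracle operator is $U_f$ on $\mathcal{H}_M\otimes\mathcal{H}_M$ with $U_f|x\rangle\otimes|y\rangle=|x\rangle\otimes|y\oplus f(x)\rangle$ ($\oplus$ addition mod $M$); the minimal oracle operator is $Q_f$ on $\mathcal{H}_M$ with $Q_f|x\rangle=|f(x)\rangle$; the entanglement-assisted minimal oracle operator is $\bar{Q}_f=Q_f\otimes\mathbb{1}_M$. *)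

theory Defs
  imports "Jordan_Normal_Form.Matrix" "HOL-Combinatorics.Permutations"
begin

(* Operators on H_M are M x M complex matrices in the basis {|x>}_{x<M};
   operators on H_M (x) H_M are (M*M) x (M*M) matrices, basis |x>(x)|y> having
   index x*M + y (standard Kronecker ordering). Entry (i,j) is <i|A|j>. *)

definition kron :: "complex mat \<Rightarrow> complex mat \<Rightarrow> complex mat" where
  "kron A B = mat (dim_row A * dim_row B) (dim_col A * dim_col B)
     (\<lambda>(i,j). A $$ (i div dim_row B, j div dim_col B) * B $$ (i mod dim_row B, j mod dim_col B))"

definition Qmin :: "nat \<Rightarrow> (nat \<Rightarrow> nat) \<Rightarrow> complex mat" where
  "Qmin M f = mat M M (\<lambda>(i,j). if i = f j then 1 else 0)"

definition Qbar :: "nat \<Rightarrow> (nat \<Rightarrow> nat) \<Rightarrow> complex mat" where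
  "Qbar M f = kron (Qmin M f) (1\<^sub>m M)"

definition Ustd :: "nat \<Rightarrow> (nat \<Rightarrow> nat) \<Rightarrow> complex mat" where
  "Ustd M f = mat (M*M) (M*M) (\<lambda>(i,j).
     if i div M = j div M \<and> i mod M = (j mod M + f (j div M)) mod M then 1 else 0)"

definition mtrace :: "complex mat \<Rightarrow> complex" where
  "mtrace A = (\<Sum>i<dim_row A. A $$ (i,i))"

definition dagger :: "complex mat \<Rightarrow> complex mat" where
  "dagger A = mat (dim_col A) (dim_row A) (\<lambda>(i,j). cnj (A $$ (j,i)))"

definition hs_inner :: "complex mat \<Rightarrow> complex mat \<Rightarrow> complex" where
  "hs_inner A B = mtrace (dagger A * B)"

definition linear_on_ops :: "nat \<Rightarrow> (complex mat \<Rightarrow> complex mat) \<Rightarrow> bool" where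
  "linear_on_ops n T \<longleftrightarrow>
     (\<forall>A \<in> carrier_mat n n. T A \<in> carrier_mat n n) \<and>
     (\<forall>A \<in> carrier_mat n n. \<forall>B \<in> carrier_mat n n. T (A + B) = T A + T B) \<and>
     (\<forall>c. \<forall>A \<in> carrier_mat n n. T (c \<cdot>\<^sub>m A) = c \<cdot>\<^sub>m T A)"

definition hs_unitary :: "nat \<Rightarrow> (complex mat \<Rightarrow> complex mat) \<Rightarrow> bool" where
  "hs_unitary n T \<longleftrightarrow>
     bij_betw T (carrier_mat n n) (carrier_mat n n) \<and>
     (\<forall>A \<in> carrier_mat n n. \<forall>B \<in> carrier_mat n n. hs_inner (T A) (T B) = hs_inner A B)"

end

theory Submission
  imports Defs
begin

definition subM :: "nat \<Rightarrow> nat \<Rightarrow> nat \<Rightarrow> nat" where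
  "subM M u v = (u + (M - v)) mod M"
definition addM :: "nat \<Rightarrow> nat \<Rightarrow> nat \<Rightarrow> nat" where
  "addM M u v = (u + v) mod M"

lemma mod2M: "(x::nat) < 2*M \<Longrightarrow> x mod M = (if x < M then x else x - M)"
proof -
  assume x: "x < 2*M"
  show ?thesis
  proof (cases "x < M")
    case True then show ?thesis by simp
  next
    case False
    then have "x = (x - M) + M" by simp
    then have "x mod M = (x - M) mod M" by (metis mod_add_self2)
    moreover have "x - M < M" using x False by simp
    ultimately show ?thesis using False by simp
  qed
qed

lemma subM_eq: "u < M \<Longrightarrow> v < M \<Longrightarrow> subM M u v = (if v \<le> u then u - v else u + M - v)"
  unfolding subM_def by (subst mod2M) auto

lemma addM_eq: "u < M \<Longrightarrow> v < M \<Longrightarrow> addM M u v = (if u + v < M then u + v else u + v - M)"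
  unfolding addM_def by (subst mod2M) auto

lemma subM_lt: "0 < M \<Longrightarrow> subM M u v < M" unfolding subM_def by simp
lemma addM_lt: "0 < M \<Longrightarrow> addM M u v < M" unfolding addM_def by simp

lemma idx_lt: "a < M \<Longrightarrow> b < (M::nat) \<Longrightarrow> a*M+b < M*M"
proof -
  assume "a < M" "b < M"
  then have "a*M + b < a*M + M" by simp
  also have "... = (a+1)*M" by simp
  also have "... \<le> M*M" using \<open>a<M\<close> by (intro mult_right_mono) auto
  finally show ?thesis .
qed

lemma idx_div: "b < (M::nat) \<Longrightarrow> (a*M+b) div M = a" by simp
lemma idx_mod: "b < (M::nat) \<Longrightarrow> (a*M+b) mod M = b" by simp

lemma add_sub: "u < M \<Longrightarrow> v < M \<Longrightarrow> addM M (subM M u v) v = u"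
  by (simp add: subM_eq addM_eq)
lemma sub_add: "u < M \<Longrightarrow> v < M \<Longrightarrow> subM M (addM M u v) v = u"
proof -
  assume u: "u < M" and v: "v < M"
  then have "addM M u v < M" by (intro addM_lt) simp
  then show ?thesis using u v by (simp add: subM_eq addM_eq split: if_splits)
qed

lemma add_comm2: "addM M (addM M x b) a = addM M (addM M x a) b"
  unfolding addM_def by (metis mod_add_left_eq add.assoc add.commute)
lemma sub_comm2: "subM M (subM M x b) a = subM M (subM M x a) b"
  unfolding subM_def by (metis mod_add_left_eq add.assoc add.commute)

lemma sub_eq_iff: "u < M \<Longrightarrow> v < M \<Longrightarrow> w < M \<Longrightarrow> (subM M u v = w) = (u = addM M v w)"
  by (simp add: subM_eq addM_eq) arith
lemma addsub_eq_iff: "a < M \<Longrightarrow> c < M \<Longrightarrow> b < M \<Longrightarrow> (addM M (subM M a c) b = b) = (a = c)"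
proof -
  assume h: "a < M" "c < M" "b < M"
  then have "subM M a c < M" by (intro subM_lt) simp
  then show ?thesis using h by (simp add: subM_eq addM_eq split: if_splits; arith)
qed

definition rI :: "nat \<Rightarrow> nat \<Rightarrow> nat \<Rightarrow> nat" where
  "rI M i j = subM M (i mod M) (j mod M) * M + addM M (subM M (i div M) (j div M)) (j mod M)"
definition sI :: "nat \<Rightarrow> nat \<Rightarrow> nat \<Rightarrow> nat" where
  "sI M k j = subM M (addM M (k mod M) (j div M)) (j mod M) * M + addM M (k div M) (j mod M)"

lemma divmod_lt: "i < M*M \<Longrightarrow> i div M < (M::nat)" "0 < M \<Longrightarrow> i mod M < (M::nat)"
  by (simp add: less_mult_imp_div_less) simp

lemma rI_lt: "0 < M \<Longrightarrow> rI M i j < M*M"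
  unfolding rI_def by (intro idx_lt subM_lt addM_lt)

lemma sI_lt: "0 < M \<Longrightarrow> sI M i j < M*M"
  unfolding sI_def by (intro idx_lt subM_lt addM_lt)

lemma rI_div: "0 < M \<Longrightarrow> rI M i j div M = subM M (i mod M) (j mod M)"
  unfolding rI_def by (intro idx_div addM_lt)
lemma rI_mod: "0 < M \<Longrightarrow> rI M i j mod M = addM M (subM M (i div M) (j div M)) (j mod M)"
  unfolding rI_def by (intro idx_mod addM_lt)
lemma sI_div: "0 < M \<Longrightarrow> sI M i j div M = subM M (addM M (i mod M) (j div M)) (j mod M)"
  unfolding sI_def by (intro idx_div addM_lt)
lemma sI_mod: "0 < M \<Longrightarrow> sI M i j mod M = addM M (i div M) (j mod M)"
  unfolding sI_def by (intro idx_mod addM_lt)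

lemma split_idx: "i = (i div M) * M + i mod (M::nat)" by simp

lemma sr: assumes M: "0 < M" and i: "i < M*M" and j: "j < M*M"
  shows "sI M (rI M i j) j = i"
proof -
  have a: "i div M < M" "i mod M < M" "j div M < M" "j mod M < M"
    using divmod_lt i j M by auto
  have "sI M (rI M i j) j = subM M (addM M (rI M i j mod M) (j div M)) (j mod M) * M + addM M (rI M i j div M) (j mod M)"
    unfolding sI_def ..
  also have "addM M (rI M i j div M) (j mod M) = i mod M"
    unfolding rI_div[OF M] using a by (simp add: add_sub)
  also have "subM M (addM M (rI M i j mod M) (j div M)) (j mod M) = i div M"
    unfolding rI_mod[OF M] using a subM_lt[OF M] addM_lt[OF M] M by (simp add: add_sub sub_add add_comm2)
  finally show ?thesis by simp
qed

lemma rs: assumes M: "0 < M" and i: "i < M*M" and j: "j < M*M"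
  shows "rI M (sI M i j) j = i"
proof -
  have a: "i div M < M" "i mod M < M" "j div M < M" "j mod M < M"
    using divmod_lt i j M by auto
  have "rI M (sI M i j) j = subM M (sI M i j mod M) (j mod M) * M + addM M (subM M (sI M i j div M) (j div M)) (j mod M)"
    unfolding rI_def ..
  also have "subM M (sI M i j mod M) (j mod M) = i div M"
    unfolding sI_mod[OF M] using a by (simp add: sub_add)
  also have "addM M (subM M (sI M i j div M) (j div M)) (j mod M) = i mod M"
    unfolding sI_div[OF M] using a addM_lt[OF M] subM_lt[OF M] M by (simp add: add_sub sub_add sub_comm2)
  finally show ?thesis by simp
qed

definition TT :: "nat \<Rightarrow> complex mat \<Rightarrow> complex mat" where
  "TT M A = mat (M*M) (M*M) (\<lambda>(i,j). A $$ (rI M i j, j))"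
definition SS :: "nat \<Rightarrow> complex mat \<Rightarrow> complex mat" where
  "SS M A = mat (M*M) (M*M) (\<lambda>(i,j). A $$ (sI M i j, j))"

lemma hs_inner_expand: assumes "A \<in> carrier_mat n n" "B \<in> carrier_mat n n"
  shows "hs_inner A B = (\<Sum>i<n. \<Sum>k<n. cnj (A $$ (k,i)) * B $$ (k,i))"
  using assms unfolding hs_inner_def mtrace_def dagger_def
  by (auto simp: scalar_prod_def atLeast0LessThan intro!: sum.cong)

theorem theorem7:
  fixes M :: nat
  assumes "M \<ge> 1"
  shows "\<exists>T :: complex mat \<Rightarrow> complex mat.
           linear_on_ops (M*M) T \<and> hs_unitary (M*M) T \<and>
           (\<forall>f. f permutes {..<M} \<longrightarrow> T (Qbar M f) = Ustd M f)"
proof (intro exI conjI allI impI)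
  have M: "0 < M" using assms by simp
  note rlt = rI_lt[OF M]
  show "linear_on_ops (M*M) (TT M)"
    unfolding linear_on_ops_def TT_def
    by (auto intro!: eq_matI simp: rlt)
  have bij: "bij_betw (TT M) (carrier_mat (M*M) (M*M)) (carrier_mat (M*M) (M*M))"
    apply (rule bij_betw_byWitness[where f'="SS M"])
    subgoal by (auto intro!: eq_matI simp: TT_def SS_def rlt sI_lt[OF M] sr[OF M] rs[OF M])
    subgoal by (auto intro!: eq_matI simp: TT_def SS_def rlt sI_lt[OF M] rs[OF M] sr[OF M])
    subgoal by (auto simp: TT_def)
    subgoal by (auto simp: SS_def)
    done
  have inner: "hs_inner (TT M A) (TT M B) = hs_inner A B"
    if A: "A \<in> carrier_mat (M*M) (M*M)" and B: "B \<in> carrier_mat (M*M) (M*M)" for A B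
  proof -
    have "hs_inner (TT M A) (TT M B) = (\<Sum>i<M*M. \<Sum>k<M*M. cnj (A $$ (rI M k i,i)) * B $$ (rI M k i,i))"
      by (subst hs_inner_expand[where n="M*M"]) (auto simp: TT_def)
    also have "\<dots> = (\<Sum>i<M*M. \<Sum>k<M*M. cnj (A $$ (k,i)) * B $$ (k,i))"
    proof (rule sum.cong[OF refl])
      fix i assume i: "i \<in> {..<M*M}"
      have bj: "bij_betw (\<lambda>k. rI M k i) {..<M*M} {..<M*M}"
        apply (rule bij_betw_byWitness[where f'="\<lambda>k. sI M k i"])
        using i by (auto simp: sr[OF M] rs[OF M] rlt sI_lt[OF M])
      show "(\<Sum>k<M*M. cnj (A $$ (rI M k i,i)) * B $$ (rI M k i,i)) = (\<Sum>k<M*M. cnj (A $$ (k,i)) * B $$ (k,i))"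
        using sum.reindex_bij_betw[OF bj, of "\<lambda>k. cnj (A $$ (k,i)) * B $$ (k,i)"] by simp
    qed
    also have "\<dots> = hs_inner A B" using hs_inner_expand[OF A B] by simp
    finally show ?thesis .
  qed
  show "hs_unitary (M*M) (TT M)"
    unfolding hs_unitary_def using bij inner by blast
  fix f assume f: "f permutes {..<M}"
  show "TT M (Qbar M f) = Ustd M f"
  proof (rule eq_matI)
    fix i j assume i: "i < dim_row (Ustd M f)" and j: "j < dim_col (Ustd M f)"
    then have i: "i < M*M" and j: "j < M*M" by (auto simp: Ustd_def)
    have a: "i div M < M" "i mod M < M" "j div M < M" "j mod M < M"
      using divmod_lt i j M by auto
    have fa: "f (j div M) < M" using permutes_in_image[OF f] a by auto
    have "TT M (Qbar M f) $$ (i,j) = Qbar M f $$ (rI M i j, j)"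
      using i j by (simp add: TT_def)
    also have "\<dots> = (if rI M i j div M = f (j div M) then 1 else 0) *
         (if rI M i j mod M = j mod M then 1 else 0)"
    proof -
      have p: "rI M i j < M*M" by (rule rlt)
      have pd: "rI M i j div M < M" using divmod_lt(1)[OF p] .
      show ?thesis using p pd j M a fa
        by (simp add: Qbar_def kron_def Qmin_def)
    qed
    also have "\<dots> = Ustd M f $$ (i,j)"
    proof -
      have e1: "(rI M i j div M = f (j div M)) = (i mod M = (j mod M + f (j div M)) mod M)"
        unfolding rI_div[OF M] sub_eq_iff[OF a(2) a(4) fa] addM_def ..
      have e2: "(rI M i j mod M = j mod M) = (i div M = j div M)"
        unfolding rI_mod[OF M] addsub_eq_iff[OF a(1) a(3) a(4)] ..
      show ?thesis unfolding e1 e2 using i j by (simp add: Ustd_def)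
    qed
    finally show "TT M (Qbar M f) $$ (i,j) = Ustd M f $$ (i,j)" .
  qed (auto simp: TT_def Ustd_def)
qed

end
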